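(* Let $1<S\le N$, $L$ a band-width vector, $\dot W$ an $L$-admissible matrix, $W_\varepsilon=\mathrm{Id}+\varepsilon\dot W$, $k\in\mathbb N$, $\beta\in\Gamma$, and $P_{\varepsilon,\beta}=D_{k,\beta,L}W_\varepsilon$. Let $\gamma>0$ be such that $P_{\varepsilon,\beta}$ has $N$ distinct eigenvalues for $0<\varepsilon<\gamma$, and for such $\varepsilon$ let $f^{(1)}_\varepsilon,\dots,f^{(N)}_\varepsilon$ be a unit-norm eigenbasis with eigenvalues $\lambda^{(\ell)}_\varepsilon$, labelled so that $\lambda^{(\ell)}_\varepsilon\to e^{-2\pi ik\beta_s}$ as $\varepsilon\to0$ whenever $\ell\in B_s$. Then for every $1\le\ell\ne m\le N$, $\lim_{\varepsilon\to0}\langle f^{(\ell)}_\varepsilon,f^{(m)}_\varepsilon\rangle=0$.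
   Context: A band-width vector is $L=(L_1,\dots,L_S)$ of positive integers with $\sum_sL_s=N$; $N_0=0$, $N_s=N_{s-1}+L_s$, $B_s=\{j:N_{s-1}<j\le N_s\}$. $D_{k,\beta,L}$ is the diagonal matrix with $j$-th entry $e^{-2\pi ik\beta_s}$ for $j\in B_s$. $\dot W$ is $L$-admissible if it is real symmetric and (1) $\dot W_{ij}\ge0$ for $i\ne j$, $\sum_j\dot W_{ij}=0$ for all $i$; (2) $\dot W$ has $N$ distinct eigenvalues; (3) each $\hat W_s=(\dot W_{jk})_{j,k\in B_s}$ has $L_s$ distinct eigenvalues. $\Gamma=\{\beta\in\mathbb R^S: e^{-2\pi ik\beta_{s_1}}\neq e^{-2\pi ik\beta_{s_2}}\text{ for all }k\ne0,\ s_1\ne s_2\}$. $\langle v,w\rangle=\sum_jv_j\overline{w_j}$. *)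

theory Defs
  imports "HOL-Analysis.Analysis" "Jordan_Normal_Form.Char_Poly"
begin

(* Band-width vector L = [L_1,...,L_S] (a list, 0-based blocks s < S).
   N_s = L_1 + ... + L_s  (so N_0 = 0), block B_s = {j. N_{s-1} <= j < N_s}
   in 0-based matrix indices (paper's j in 1..N corresponds to j-1 here). *)

definition bw_vector :: "nat list \<Rightarrow> bool" where
  "bw_vector L \<longleftrightarrow> (\<forall>s<length L. 0 < L ! s)"

definition bwN :: "nat list \<Rightarrow> nat \<Rightarrow> nat" where
  "bwN L s = sum_list (take s L)"

definition block :: "nat list \<Rightarrow> nat \<Rightarrow> nat set" where
  "block L s = {j. bwN L s \<le> j \<and> j < bwN L (Suc s)}"

definition Dmat :: "nat \<Rightarrow> (nat \<Rightarrow> real) \<Rightarrow> nat list \<Rightarrow> complex mat" where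
  "Dmat k \<beta> L = mat (sum_list L) (sum_list L) (\<lambda>(i,j).
      if i = j then (\<Sum>s<length L. if i \<in> block L s
           then cis (- 2 * pi * real k * \<beta> s) else 0) else 0)"

definition diag_block :: "'a mat \<Rightarrow> nat list \<Rightarrow> nat \<Rightarrow> 'a mat" where
  "diag_block W L s = mat (L ! s) (L ! s) (\<lambda>(i,j). W $$ (bwN L s + i, bwN L s + j))"

definition L_admissible :: "nat list \<Rightarrow> real mat \<Rightarrow> bool" where
  "L_admissible L W \<longleftrightarrow>
     (let N = sum_list L in
      W \<in> carrier_mat N N \<and> transpose_mat W = W \<and>
      (\<forall>i<N. \<forall>j<N. i \<noteq> j \<longrightarrow> W $$ (i,j) \<ge> 0) \<and>
      (\<forall>i<N. (\<Sum>j<N. W $$ (i,j)) = 0) \<and>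
      card {x. eigenvalue W x} = N \<and>
      (\<forall>s<length L. card {x. eigenvalue (diag_block W L s) x} = L ! s))"

definition Gamma :: "nat \<Rightarrow> (nat \<Rightarrow> real) set" where
  "Gamma S = {\<beta>. \<forall>k::int. \<forall>s1<S. \<forall>s2<S. k \<noteq> 0 \<and> s1 \<noteq> s2 \<longrightarrow>
      cis (- 2 * pi * real_of_int k * \<beta> s1) \<noteq> cis (- 2 * pi * real_of_int k * \<beta> s2)}"

definition cinner :: "complex vec \<Rightarrow> complex vec \<Rightarrow> complex" where
  "cinner v w = (\<Sum>j<dim_vec v. v $ j * cnj (w $ j))"

definition cvnorm :: "complex vec \<Rightarrow> real" where
  "cvnorm v = sqrt (\<Sum>j<dim_vec v. (cmod (v $ j))\<^sup>2)"

end

theory Submission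
  imports Defs
begin

no_notation Finite_Cartesian_Product.vec_nth (infixl "$" 90)

lemma det_row_scale:
  fixes A M :: "'a::comm_ring_1 mat"
  assumes A: "A \<in> carrier_mat n n" and M: "M \<in> carrier_mat n n"
    and e: "\<And>i j. i < n \<Longrightarrow> j < n \<Longrightarrow> A $$ (i,j) = s i * M $$ (i,j)"
  shows "det A = (\<Prod>i<n. s i) * det M"
proof -
  have "det A = (\<Sum>p\<in>{p. p permutes {0..<n}}. signof p * (\<Prod>i=0..<n. A $$ (i, p i)))"
    by (rule det_def'[OF A])
  also have "\<dots> = (\<Sum>p\<in>{p. p permutes {0..<n}}. (\<Prod>i<n. s i) * (signof p * (\<Prod>i=0..<n. M $$ (i, p i))))"
  proof (rule sum.cong[OF refl])
    fix p assume "p \<in> {p. p permutes {0..<n}}"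
    then have p: "p permutes {0..<n}" by simp
    have "(\<Prod>i=0..<n. A $$ (i, p i)) = (\<Prod>i=0..<n. s i * M $$ (i, p i))"
      by (rule prod.cong[OF refl], rule e, simp, use p permutes_in_image in fastforce)
    also have "\<dots> = (\<Prod>i<n. s i) * (\<Prod>i=0..<n. M $$ (i, p i))"
      by (simp add: prod.distrib atLeast0LessThan)
    finally show "signof p * (\<Prod>i=0..<n. A $$ (i, p i)) = (\<Prod>i<n. s i) * (signof p * (\<Prod>i=0..<n. M $$ (i, p i)))"
      by (simp add: algebra_simps)
  qed
  also have "\<dots> = (\<Prod>i<n. s i) * det M"
    by (simp add: det_def'[OF M] sum_distrib_left)
  finally show ?thesis .
qed

lemma det_tendsto:
  fixes M :: "'b \<Rightarrow> complex mat"
  assumes M: "\<And>x. M x \<in> carrier_mat n n" and M0: "M0 \<in> carrier_mat n n"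
    and lim: "\<And>i j. i < n \<Longrightarrow> j < n \<Longrightarrow> ((\<lambda>x. M x $$ (i,j)) \<longlongrightarrow> M0 $$ (i,j)) F"
  shows "((\<lambda>x. det (M x)) \<longlongrightarrow> det M0) F"
proof -
  have eq: "(\<lambda>x. det (M x)) = (\<lambda>x. \<Sum>p\<in>{p. p permutes {0..<n}}. signof p * (\<Prod>i=0..<n. M x $$ (i, p i)))"
    using det_def'[OF M] by auto
  show ?thesis unfolding eq det_def'[OF M0]
  proof (intro tendsto_sum tendsto_mult tendsto_const tendsto_prod)
    fix p i assume "p \<in> {p. p permutes {0..<n}}" "i \<in> {0..<n}"
    then show "((\<lambda>x. M x $$ (i, p i)) \<longlongrightarrow> M0 $$ (i, p i)) F"
      using lim permutes_in_image by fastforce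
  qed
qed

lemma char_poly_prod:
  fixes A :: "complex mat" and g :: "nat \<Rightarrow> complex"
  assumes A: "A \<in> carrier_mat n n" and card: "card {x. eigenvalue A x} = n"
    and inj: "inj_on g {..<n}" and ev: "\<And>j. j < n \<Longrightarrow> eigenvalue A (g j)"
  shows "poly (char_poly A) y = (\<Prod>j<n. y - g j)"
proof -
  obtain as where cp: "char_poly A = (\<Prod>a\<leftarrow>as. [:- a, 1:])" and len: "length as = n"
    using char_poly_factorized[OF A] by blast
  have pe: "poly (char_poly A) y = (\<Prod>a\<leftarrow>as. y - a)" for y
    unfolding cp by (induct as) (auto simp: algebra_simps)
  have roots: "{x. eigenvalue A x} = set as"
  proof -
    have "eigenvalue A x \<longleftrightarrow> x \<in> set as" for x
      unfolding eigenvalue_root_char_poly[OF A] pe by (induct as) auto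
    then show ?thesis by auto
  qed
  have dist: "distinct as" using card len roots by (metis card_distinct)
  have img: "g ` {..<n} = set as"
  proof (rule card_subset_eq)
    show "finite (set as)" by simp
    show "g ` {..<n} \<subseteq> set as" using ev roots by auto
    show "card (g ` {..<n}) = card (set as)" using card_image[OF inj] card roots by simp
  qed
  have "poly (char_poly A) y = (\<Prod>a\<in>set as. y - a)"
    unfolding pe using dist by (simp add: prod.distinct_set_conv_list)
  also have "\<dots> = (\<Prod>j<n. y - g j)"
    unfolding img[symmetric] by (simp add: prod.reindex[OF inj])
  finally show ?thesis .
qed

lemma finite_bolzano:
  fixes x :: "nat \<Rightarrow> nat \<Rightarrow> complex"
  assumes "finite J" and "\<And>j. j \<in> J \<Longrightarrow> bounded (range (x j))"
  shows "\<exists>r. strict_mono r \<and> (\<forall>j\<in>J. \<exists>l. (\<lambda>n. x j (r n)) \<longlonglongrightarrow> l)"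
  using assms
proof (induct J rule: finite_induct)
  case empty
  then show ?case by (intro exI[of _ id]) (auto simp: strict_mono_def)
next
  case (insert a J)
  then obtain r where r: "strict_mono r" and c: "\<forall>j\<in>J. \<exists>l. (\<lambda>n. x j (r n)) \<longlonglongrightarrow> l" by auto
  have "bounded (range (\<lambda>n. x a (r n)))"
    using insert(4)[of a] by (rule bounded_subset) auto
  then obtain l r' where r': "strict_mono r'" and la: "((\<lambda>n. x a (r n)) \<circ> r') \<longlonglongrightarrow> l"
    using bounded_imp_convergent_subsequence by blast
  show ?case
  proof (rule exI[of _ "r \<circ> r'"], intro conjI ballI)
    show "strict_mono (r \<circ> r')" using r r' by (simp add: strict_mono_o)
    fix j assume "j \<in> insert a J"
    show "\<exists>l. (\<lambda>n. x j ((r \<circ> r') n)) \<longlonglongrightarrow> l"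
    proof (cases "j = a")
      case True then show ?thesis using la by (auto simp: o_def)
    next
      case False
      then have "j \<in> J" using \<open>j \<in> insert a J\<close> by auto
      then obtain l where "(\<lambda>n. x j (r n)) \<longlonglongrightarrow> l" using c by auto
      from LIMSEQ_subseq_LIMSEQ[OF this r'] show ?thesis by (auto simp: o_def)
    qed
  qed
qed


locale pert =
  fixes N :: nat and d :: "nat \<Rightarrow> complex" and W :: "nat \<Rightarrow> nat \<Rightarrow> real" and \<gamma> :: real
    and f :: "real \<Rightarrow> nat \<Rightarrow> complex vec" and lam :: "real \<Rightarrow> nat \<Rightarrow> complex"
    and P :: "real \<Rightarrow> complex mat"
  assumes P_eq: "\<And>\<epsilon>. P \<epsilon> = mat N N (\<lambda>(i,j). d i * ((if i = j then 1 else 0) + of_real \<epsilon> * of_real (W i j)))"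
    and Wsym: "\<And>i j. i < N \<Longrightarrow> j < N \<Longrightarrow> W i j = W j i"
    and gpos: "0 < \<gamma>"
    and card_ev: "\<And>\<epsilon>. 0 < \<epsilon> \<Longrightarrow> \<epsilon> < \<gamma> \<Longrightarrow> card {x. eigenvalue (P \<epsilon>) x} = N"
    and fprop: "\<And>\<epsilon> l. 0 < \<epsilon> \<Longrightarrow> \<epsilon> < \<gamma> \<Longrightarrow> l < N \<Longrightarrow>
           f \<epsilon> l \<in> carrier_vec N \<and> cvnorm (f \<epsilon> l) = 1 \<and> P \<epsilon> *\<^sub>v f \<epsilon> l = lam \<epsilon> l \<cdot>\<^sub>v f \<epsilon> l"
    and inj: "\<And>\<epsilon>. 0 < \<epsilon> \<Longrightarrow> \<epsilon> < \<gamma> \<Longrightarrow> inj_on (lam \<epsilon>) {..<N}"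
    and lim: "\<And>l. l < N \<Longrightarrow> ((\<lambda>\<epsilon>. lam \<epsilon> l) \<longlongrightarrow> d l) (at_right 0)"
begin

definition Wv :: "real \<Rightarrow> nat \<Rightarrow> nat \<Rightarrow> complex" where
  "Wv \<epsilon> l i = (\<Sum>j<N. of_real (W i j) * f \<epsilon> l $ j)"

definition CW :: real where "CW = (\<Sum>i<N. \<Sum>j<N. \<bar>W i j\<bar>)"

lemma ev_good: "eventually (\<lambda>\<epsilon>. 0 < \<epsilon> \<and> \<epsilon> < \<gamma>) (at_right 0)"
  using gpos by (auto simp: eventually_at_right_field intro!: exI[of _ \<gamma>])

lemma P_carrier: "P \<epsilon> \<in> carrier_mat N N"
  by (simp add: P_eq)

lemma ev_eq:
  assumes "0 < \<epsilon>" "\<epsilon> < \<gamma>" "l < N" "i < N"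
  shows "d i * (f \<epsilon> l $ i + of_real \<epsilon> * Wv \<epsilon> l i) = lam \<epsilon> l * f \<epsilon> l $ i"
proof -
  have fc: "f \<epsilon> l \<in> carrier_vec N" and e: "P \<epsilon> *\<^sub>v f \<epsilon> l = lam \<epsilon> l \<cdot>\<^sub>v f \<epsilon> l"
    using fprop[OF assms(1-3)] by auto
  have "(P \<epsilon> *\<^sub>v f \<epsilon> l) $ i = lam \<epsilon> l * f \<epsilon> l $ i"
    using e fc assms(4) by simp
  moreover have "(P \<epsilon> *\<^sub>v f \<epsilon> l) $ i = (\<Sum>j<N. d i * ((if i = j then 1 else 0) + of_real \<epsilon> * of_real (W i j)) * f \<epsilon> l $ j)"
    using fc assms(4) by (simp add: P_eq scalar_prod_def atLeast0LessThan)
  moreover have "\<dots> = (\<Sum>j<N. (if i = j then d i * f \<epsilon> l $ j else 0)) + (\<Sum>j<N. d i * (of_real \<epsilon> * (of_real (W i j) * f \<epsilon> l $ j)))"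
    by (subst sum.distrib[symmetric], rule sum.cong) (auto simp: algebra_simps)
  moreover have "\<dots> = d i * (f \<epsilon> l $ i + of_real \<epsilon> * Wv \<epsilon> l i)"
    using assms(4) by (simp add: Wv_def sum_distrib_left algebra_simps)
  ultimately show ?thesis by simp
qed

lemma fbound:
  assumes "0 < \<epsilon>" "\<epsilon> < \<gamma>" "l < N" "i < N"
  shows "cmod (f \<epsilon> l $ i) \<le> 1"
proof -
  have fc: "f \<epsilon> l \<in> carrier_vec N" and n: "cvnorm (f \<epsilon> l) = 1"
    using fprop[OF assms(1-3)] by auto
  then have s: "(\<Sum>j<N. (cmod (f \<epsilon> l $ j))\<^sup>2) = 1"
    unfolding cvnorm_def by (metis carrier_vecD real_sqrt_eq_1_iff)
  have "(cmod (f \<epsilon> l $ i))\<^sup>2 \<le> (\<Sum>j<N. (cmod (f \<epsilon> l $ j))\<^sup>2)"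
    using assms(4) by (intro member_le_sum) auto
  then have "(cmod (f \<epsilon> l $ i))\<^sup>2 \<le> 1" using s by simp
  then show ?thesis by (simp add: power_le_one_iff abs_le_square_iff)
qed

lemma Wv_bound:
  assumes "0 < \<epsilon>" "\<epsilon> < \<gamma>" "l < N" "i < N"
  shows "cmod (Wv \<epsilon> l i) \<le> CW"
proof -
  have "cmod (Wv \<epsilon> l i) \<le> (\<Sum>j<N. cmod (of_real (W i j) * f \<epsilon> l $ j))"
    unfolding Wv_def by (rule norm_sum)
  also have "\<dots> \<le> (\<Sum>j<N. \<bar>W i j\<bar>)"
  proof (rule sum_mono)
    fix j assume "j \<in> {..<N}"
    then have "cmod (f \<epsilon> l $ j) \<le> 1" using fbound assms by auto
    then show "cmod (of_real (W i j) * f \<epsilon> l $ j) \<le> \<bar>W i j\<bar>"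
      by (simp add: norm_mult mult_left_le)
  qed
  also have "\<dots> \<le> CW" unfolding CW_def
    using assms(4) by (intro member_le_sum[where f = "\<lambda>i. \<Sum>j<N. \<bar>W i j\<bar>"]) (auto intro: sum_nonneg)
  finally show ?thesis .
qed

lemma CW_nonneg: "0 \<le> CW" unfolding CW_def by (auto intro!: sum_nonneg)

lemma conc:
  assumes "l < N" "i < N" "d i \<noteq> d l"
  shows "((\<lambda>\<epsilon>. f \<epsilon> l $ i) \<longlongrightarrow> 0) (at_right 0)"
proof (rule Lim_null_comparison)
  let ?g = "\<lambda>\<epsilon>. \<epsilon> * (cmod (d i) * CW) * cmod (1 / (lam \<epsilon> l - d i))"
  have "(?g \<longlongrightarrow> 0 * (cmod (d i) * CW) * cmod (1 / (d l - d i))) (at_right 0)"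
    by (intro tendsto_intros lim assms) (use assms in auto)
  then show "(?g \<longlongrightarrow> 0) (at_right 0)" by simp
  have "eventually (\<lambda>\<epsilon>. lam \<epsilon> l \<noteq> d i) (at_right 0)"
    using tendsto_imp_eventually_ne[OF lim[OF assms(1)]] assms(3) by auto
  then show "eventually (\<lambda>\<epsilon>. norm (f \<epsilon> l $ i) \<le> ?g \<epsilon>) (at_right 0)"
    using ev_good
  proof eventually_elim
    case (elim \<epsilon>)
    then have ne: "lam \<epsilon> l - d i \<noteq> 0" and e: "0 < \<epsilon>" "\<epsilon> < \<gamma>" by auto
    have "d i * (f \<epsilon> l $ i + of_real \<epsilon> * Wv \<epsilon> l i) = lam \<epsilon> l * f \<epsilon> l $ i"
      by (rule ev_eq) (use e assms in auto)
    then have "f \<epsilon> l $ i = of_real \<epsilon> * d i * Wv \<epsilon> l i / (lam \<epsilon> l - d i)"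
      using ne by (simp add: field_simps)
    then have "norm (f \<epsilon> l $ i) = \<epsilon> * cmod (d i) * cmod (Wv \<epsilon> l i) * cmod (1 / (lam \<epsilon> l - d i))"
      using e by (simp add: norm_mult norm_divide)
    also have "\<dots> \<le> \<epsilon> * cmod (d i) * CW * cmod (1 / (lam \<epsilon> l - d i))"
      using Wv_bound[OF e assms(1,2)] e by (intro mult_right_mono mult_left_mono) auto
    finally show ?case by (simp add: mult.assoc)
  qed
qed

lemma cinner_eq:
  assumes "0 < \<epsilon>" "\<epsilon> < \<gamma>" "l < N"
  shows "cinner (f \<epsilon> l) (f \<epsilon> m) = (\<Sum>i<N. f \<epsilon> l $ i * cnj (f \<epsilon> m $ i))"
  using fprop[OF assms] unfolding cinner_def by (metis carrier_vecD)

lemma diff_case: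
  assumes "l < N" "m < N" "d l \<noteq> d m"
  shows "((\<lambda>\<epsilon>. cinner (f \<epsilon> l) (f \<epsilon> m)) \<longlongrightarrow> 0) (at_right 0)"
proof -
  have "((\<lambda>\<epsilon>. \<Sum>i<N. f \<epsilon> l $ i * cnj (f \<epsilon> m $ i)) \<longlongrightarrow> (\<Sum>i<N. 0)) (at_right 0)"
  proof (rule tendsto_sum)
    fix i assume i: "i \<in> {..<N}"
    show "((\<lambda>\<epsilon>. f \<epsilon> l $ i * cnj (f \<epsilon> m $ i)) \<longlongrightarrow> 0) (at_right 0)"
    proof (cases "d i = d l")
      case True
      then have "d i \<noteq> d m" using assms by auto
      from conc[OF assms(2) _ this] i have c: "((\<lambda>\<epsilon>. f \<epsilon> m $ i) \<longlongrightarrow> 0) (at_right 0)" by auto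
      show ?thesis
      proof (rule Lim_null_comparison[OF _ tendsto_norm_zero[OF c]])
        show "eventually (\<lambda>\<epsilon>. norm (f \<epsilon> l $ i * cnj (f \<epsilon> m $ i)) \<le> norm (f \<epsilon> m $ i)) (at_right 0)"
          using ev_good
        proof eventually_elim
          case (elim \<epsilon>)
          then have "cmod (f \<epsilon> l $ i) \<le> 1" using fbound assms i by auto
          then show ?case by (simp add: norm_mult mult_left_le_one_le)
        qed
      qed
    next
      case False
      from conc[OF assms(1) _ this] i have c: "((\<lambda>\<epsilon>. f \<epsilon> l $ i) \<longlongrightarrow> 0) (at_right 0)" by auto
      show ?thesis
      proof (rule Lim_null_comparison[OF _ tendsto_norm_zero[OF c]])
        show "eventually (\<lambda>\<epsilon>. norm (f \<epsilon> l $ i * cnj (f \<epsilon> m $ i)) \<le> norm (f \<epsilon> l $ i)) (at_right 0)"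
          using ev_good
        proof eventually_elim
          case (elim \<epsilon>)
          then have "cmod (f \<epsilon> m $ i) \<le> 1" using fbound assms i by auto
          then show ?case by (simp add: norm_mult mult_left_le)
        qed
      qed
    qed
  qed
  then have "((\<lambda>\<epsilon>. \<Sum>i<N. f \<epsilon> l $ i * cnj (f \<epsilon> m $ i)) \<longlongrightarrow> 0) (at_right 0)" by simp
  then show ?thesis
    by (rule Lim_transform_eventually) (use ev_good cinner_eq assms in \<open>auto elim: eventually_mono\<close>)
qed

lemma sym_sum:
  shows "(\<Sum>i<N. Wv \<epsilon> l i * cnj (f \<epsilon> m $ i)) = (\<Sum>i<N. f \<epsilon> l $ i * cnj (Wv \<epsilon> m i))"
proof -
  have "(\<Sum>i<N. f \<epsilon> l $ i * cnj (Wv \<epsilon> m i)) = (\<Sum>i<N. \<Sum>j<N. f \<epsilon> l $ i * of_real (W i j) * cnj (f \<epsilon> m $ j))"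
    by (simp add: Wv_def sum_distrib_left mult.assoc)
  also have "\<dots> = (\<Sum>j<N. \<Sum>i<N. f \<epsilon> l $ i * of_real (W i j) * cnj (f \<epsilon> m $ j))"
    by (rule sum.swap)
  also have "\<dots> = (\<Sum>j<N. \<Sum>i<N. of_real (W j i) * f \<epsilon> l $ i * cnj (f \<epsilon> m $ j))"
    by (intro sum.cong refl) (simp add: Wsym)
  also have "\<dots> = (\<Sum>i<N. Wv \<epsilon> l i * cnj (f \<epsilon> m $ i))"
    by (simp add: Wv_def sum_distrib_right)
  finally show ?thesis by simp
qed

end

locale pert_block = pert +
  fixes c :: complex and E :: "real set"
  assumes c_ne: "c \<noteq> 0"
    and E_card: "card E = card {j. j < N \<and> d j = c}"
    and E_vec: "\<And>x. x \<in> E \<Longrightarrow> \<exists>v::nat \<Rightarrow> complex. (\<exists>i. i < N \<and> d i = c \<and> v i \<noteq> 0) \<and>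
        (\<forall>i. \<not> (i < N \<and> d i = c) \<longrightarrow> v i = 0) \<and>
        (\<forall>i. i < N \<and> d i = c \<longrightarrow> (\<Sum>j<N. of_real (W i j) * v j) = of_real x * v i)"
begin

definition B :: "nat set" where "B = {j. j < N \<and> d j = c}"

definition z :: "real \<Rightarrow> nat \<Rightarrow> complex" where
  "z \<epsilon> j = (lam \<epsilon> j - c) / (of_real \<epsilon> * c)"

lemma B_sub: "B \<subseteq> {..<N}" by (auto simp: B_def)
lemma B_iff: "j \<in> B \<longleftrightarrow> j < N \<and> d j = c" by (simp add: B_def)
lemma finB: "finite B" using B_sub finite_subset by blast

lemma Wv_block:
  assumes "0 < \<epsilon>" "\<epsilon> < \<gamma>" "l \<in> B" "i \<in> B"
  shows "Wv \<epsilon> l i = z \<epsilon> l * f \<epsilon> l $ i"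
proof -
  have "d i * (f \<epsilon> l $ i + of_real \<epsilon> * Wv \<epsilon> l i) = lam \<epsilon> l * f \<epsilon> l $ i"
    by (rule ev_eq) (use assms in \<open>auto simp: B_def\<close>)
  moreover have "d i = c" using assms by (auto simp: B_def)
  ultimately show ?thesis using assms c_ne
    by (simp add: z_def field_simps)
qed

lemma out_conc:
  assumes "l \<in> B" "i < N" "i \<notin> B"
  shows "((\<lambda>\<epsilon>. f \<epsilon> l $ i) \<longlongrightarrow> 0) (at_right 0)"
  by (rule conc) (use assms in \<open>auto simp: B_def\<close>)

definition Q :: "real \<Rightarrow> nat \<Rightarrow> nat \<Rightarrow> complex" where
  "Q \<epsilon> l m = (\<Sum>i\<in>B. f \<epsilon> l $ i * cnj (f \<epsilon> m $ i))"

lemma sum_split: "(\<Sum>i<N. g i) = (\<Sum>i\<in>B. g i) + (\<Sum>i\<in>{..<N}-B. g i)" for g :: "nat \<Rightarrow> complex"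
  using B_sub by (metis add.commute finite_lessThan sum.subset_diff)

lemma sum_split_r: "(\<Sum>i<N. g i) = (\<Sum>i\<in>B. g i) + (\<Sum>i\<in>{..<N}-B. g i)" for g :: "nat \<Rightarrow> real"
  using B_sub by (metis add.commute finite_lessThan sum.subset_diff)

lemma out_sum_zero:
  assumes "l \<in> B" and bnd: "eventually (\<lambda>\<epsilon>. \<forall>i<N. norm (h \<epsilon> i) \<le> K) (at_right 0)"
  shows "((\<lambda>\<epsilon>. \<Sum>i\<in>{..<N}-B. h \<epsilon> i * f \<epsilon> l $ i) \<longlongrightarrow> 0) (at_right 0)"
proof -
  have "((\<lambda>\<epsilon>. \<Sum>i\<in>{..<N}-B. h \<epsilon> i * f \<epsilon> l $ i) \<longlongrightarrow> (\<Sum>i\<in>{..<N}-B. 0)) (at_right 0)"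
  proof (rule tendsto_sum)
    fix i assume i: "i \<in> {..<N}-B"
    have c: "((\<lambda>\<epsilon>. K * norm (f \<epsilon> l $ i)) \<longlongrightarrow> K * 0) (at_right 0)"
      by (intro tendsto_intros tendsto_norm_zero out_conc) (use i assms in auto)
    show "((\<lambda>\<epsilon>. h \<epsilon> i * f \<epsilon> l $ i) \<longlongrightarrow> 0) (at_right 0)"
    proof (rule Lim_null_comparison)
      show "((\<lambda>\<epsilon>. K * norm (f \<epsilon> l $ i)) \<longlongrightarrow> 0) (at_right 0)" using c by simp
      show "eventually (\<lambda>\<epsilon>. norm (h \<epsilon> i * f \<epsilon> l $ i) \<le> K * norm (f \<epsilon> l $ i)) (at_right 0)"
        using bnd
      proof eventually_elim
        case (elim \<epsilon>)
        then show ?case using i by (auto simp: norm_mult intro: mult_right_mono)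
      qed
    qed
  qed
  then show ?thesis by simp
qed

lemma T_zero:
  assumes "l \<in> B" "m \<in> B"
  shows "((\<lambda>\<epsilon>. (z \<epsilon> l - cnj (z \<epsilon> m)) * Q \<epsilon> l m) \<longlongrightarrow> 0) (at_right 0)"
proof -
  have lN: "l < N" "m < N" using assms B_sub by auto
  let ?R1 = "\<lambda>\<epsilon>. \<Sum>i\<in>{..<N}-B. cnj (Wv \<epsilon> l i) * f \<epsilon> m $ i"
  let ?R2 = "\<lambda>\<epsilon>. \<Sum>i\<in>{..<N}-B. cnj (Wv \<epsilon> m i) * f \<epsilon> l $ i"
  have bl: "eventually (\<lambda>\<epsilon>. \<forall>i<N. norm (cnj (Wv \<epsilon> l i)) \<le> CW) (at_right 0)"
    using ev_good by eventually_elim (use Wv_bound lN in auto)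
  have bm: "eventually (\<lambda>\<epsilon>. \<forall>i<N. norm (cnj (Wv \<epsilon> m i)) \<le> CW) (at_right 0)"
    using ev_good by eventually_elim (use Wv_bound lN in auto)
  have r1: "(?R1 \<longlongrightarrow> 0) (at_right 0)" by (rule out_sum_zero[OF assms(2) bl])
  have r2: "(?R2 \<longlongrightarrow> 0) (at_right 0)" by (rule out_sum_zero[OF assms(1) bm])
  have "((\<lambda>\<epsilon>. ?R2 \<epsilon> - cnj (?R1 \<epsilon>)) \<longlongrightarrow> 0 - cnj 0) (at_right 0)"
    by (intro tendsto_intros r1 r2)
  then have lim0: "((\<lambda>\<epsilon>. ?R2 \<epsilon> - cnj (?R1 \<epsilon>)) \<longlongrightarrow> 0) (at_right 0)" by simp
  show ?thesis
  proof (rule Lim_transform_eventually[OF lim0])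
    show "eventually (\<lambda>\<epsilon>. ?R2 \<epsilon> - cnj (?R1 \<epsilon>) = (z \<epsilon> l - cnj (z \<epsilon> m)) * Q \<epsilon> l m) (at_right 0)"
      using ev_good
    proof eventually_elim
      case (elim \<epsilon>)
      then have e: "0 < \<epsilon>" "\<epsilon> < \<gamma>" by auto
      have s: "(\<Sum>i<N. Wv \<epsilon> l i * cnj (f \<epsilon> m $ i)) = (\<Sum>i<N. f \<epsilon> l $ i * cnj (Wv \<epsilon> m i))"
        by (rule sym_sum)
      have a: "(\<Sum>i\<in>B. Wv \<epsilon> l i * cnj (f \<epsilon> m $ i)) = z \<epsilon> l * Q \<epsilon> l m"
        unfolding Q_def sum_distrib_left
        by (rule sum.cong) (use Wv_block[OF e assms(1)] in auto)
      have b: "(\<Sum>i\<in>B. f \<epsilon> l $ i * cnj (Wv \<epsilon> m i)) = cnj (z \<epsilon> m) * Q \<epsilon> l m"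
        unfolding Q_def sum_distrib_left
        by (rule sum.cong) (use Wv_block[OF e assms(2)] in auto)
      have c1: "(\<Sum>i\<in>{..<N}-B. Wv \<epsilon> l i * cnj (f \<epsilon> m $ i)) = cnj (?R1 \<epsilon>)"
        by (simp add: cnj_sum mult.commute)
      have c2: "(\<Sum>i\<in>{..<N}-B. f \<epsilon> l $ i * cnj (Wv \<epsilon> m i)) = ?R2 \<epsilon>"
        by (simp add: mult.commute)
      from s[unfolded sum_split[of "\<lambda>i. Wv \<epsilon> l i * cnj (f \<epsilon> m $ i)"] sum_split[of "\<lambda>i. f \<epsilon> l $ i * cnj (Wv \<epsilon> m i)"] a b c1 c2]
      show ?case by (simp add: algebra_simps)
    qed
  qed
qed

lemma inner_Q:
  assumes "l \<in> B" "m \<in> B"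
  shows "((\<lambda>\<epsilon>. cinner (f \<epsilon> l) (f \<epsilon> m) - Q \<epsilon> l m) \<longlongrightarrow> 0) (at_right 0)"
proof -
  have lN: "l < N" "m < N" using assms B_sub by auto
  have bm: "eventually (\<lambda>\<epsilon>. \<forall>i<N. norm (cnj (f \<epsilon> m $ i)) \<le> 1) (at_right 0)"
    using ev_good by eventually_elim (use fbound lN in auto)
  have r: "((\<lambda>\<epsilon>. \<Sum>i\<in>{..<N}-B. cnj (f \<epsilon> m $ i) * f \<epsilon> l $ i) \<longlongrightarrow> 0) (at_right 0)"
    by (rule out_sum_zero[OF assms(1) bm])
  show ?thesis
  proof (rule Lim_transform_eventually[OF r])
    show "eventually (\<lambda>\<epsilon>. (\<Sum>i\<in>{..<N}-B. cnj (f \<epsilon> m $ i) * f \<epsilon> l $ i) = cinner (f \<epsilon> l) (f \<epsilon> m) - Q \<epsilon> l m) (at_right 0)"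
      using ev_good
    proof eventually_elim
      case (elim \<epsilon>)
      then show ?case using cinner_eq[of \<epsilon> l m] lN
        by (simp add: Q_def sum_split[of "\<lambda>i. f \<epsilon> l $ i * cnj (f \<epsilon> m $ i)"] mult.commute)
    qed
  qed
qed


lemma fnorm_sum:
  assumes "0 < \<epsilon>" "\<epsilon> < \<gamma>" "l < N"
  shows "(\<Sum>j<N. (cmod (f \<epsilon> l $ j))\<^sup>2) = 1"
proof -
  have fc: "f \<epsilon> l \<in> carrier_vec N" and n: "cvnorm (f \<epsilon> l) = 1"
    using fprop[OF assms(1-3)] by auto
  then show ?thesis
    unfolding cvnorm_def by (metis carrier_vecD real_sqrt_eq_1_iff)
qed

lemma mass:
  assumes "l \<in> B"
  shows "eventually (\<lambda>\<epsilon>. 1/2 \<le> (\<Sum>i\<in>B. (cmod (f \<epsilon> l $ i))\<^sup>2)) (at_right 0)"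
proof -
  have "((\<lambda>\<epsilon>. \<Sum>i\<in>{..<N}-B. (cmod (f \<epsilon> l $ i))\<^sup>2) \<longlongrightarrow> (\<Sum>i\<in>{..<N}-B. 0)) (at_right 0)"
  proof (rule tendsto_sum)
    fix i assume i: "i \<in> {..<N}-B"
    have "((\<lambda>\<epsilon>. (cmod (f \<epsilon> l $ i))\<^sup>2) \<longlongrightarrow> 0\<^sup>2) (at_right 0)"
      by (intro tendsto_intros tendsto_norm_zero out_conc) (use i assms in auto)
    then show "((\<lambda>\<epsilon>. (cmod (f \<epsilon> l $ i))\<^sup>2) \<longlongrightarrow> 0) (at_right 0)" by simp
  qed
  then have "((\<lambda>\<epsilon>. \<Sum>i\<in>{..<N}-B. (cmod (f \<epsilon> l $ i))\<^sup>2) \<longlongrightarrow> 0) (at_right 0)" by simp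
  from order_tendstoD(2)[OF this, of "1/2"]
  have "eventually (\<lambda>\<epsilon>. (\<Sum>i\<in>{..<N}-B. (cmod (f \<epsilon> l $ i))\<^sup>2) < 1/2) (at_right 0)" by simp
  then show ?thesis using ev_good
  proof eventually_elim
    case (elim \<epsilon>)
    then have "(\<Sum>j<N. (cmod (f \<epsilon> l $ j))\<^sup>2) = 1" using fnorm_sum assms B_sub by auto
    then show ?case using elim sum_split_r[of "\<lambda>i. (cmod (f \<epsilon> l $ i))\<^sup>2"] by linarith
  qed
qed

definition Kz :: real where "Kz = 2 * real (card B) * CW\<^sup>2"

lemma zbound:
  assumes "l \<in> B"
  shows "eventually (\<lambda>\<epsilon>. (cmod (z \<epsilon> l))\<^sup>2 \<le> Kz) (at_right 0)"
  using mass[OF assms] ev_good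
proof eventually_elim
  case (elim \<epsilon>)
  then have e: "0 < \<epsilon>" "\<epsilon> < \<gamma>" by auto
  have lN: "l < N" using assms B_sub by auto
  have "\<forall>i\<in>B. (cmod (z \<epsilon> l))\<^sup>2 * (cmod (f \<epsilon> l $ i))\<^sup>2 \<le> CW\<^sup>2"
  proof
    fix i assume i: "i \<in> B"
    have "cmod (z \<epsilon> l) * cmod (f \<epsilon> l $ i) = cmod (Wv \<epsilon> l i)"
      using Wv_block[OF e assms i] by (simp add: norm_mult)
    also have "\<dots> \<le> CW" using Wv_bound[OF e lN] i B_sub by auto
    finally have "cmod (z \<epsilon> l) * cmod (f \<epsilon> l $ i) \<le> CW" .
    then have "(cmod (z \<epsilon> l) * cmod (f \<epsilon> l $ i))\<^sup>2 \<le> CW\<^sup>2"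
      by (intro power_mono) auto
    then show "(cmod (z \<epsilon> l))\<^sup>2 * (cmod (f \<epsilon> l $ i))\<^sup>2 \<le> CW\<^sup>2" by (simp add: power_mult_distrib)
  qed
  then have "(\<Sum>i\<in>B. (cmod (z \<epsilon> l))\<^sup>2 * (cmod (f \<epsilon> l $ i))\<^sup>2) \<le> (\<Sum>i\<in>B. CW\<^sup>2)"
    by (intro sum_mono) auto
  then have "(cmod (z \<epsilon> l))\<^sup>2 * (\<Sum>i\<in>B. (cmod (f \<epsilon> l $ i))\<^sup>2) \<le> real (card B) * CW\<^sup>2"
    by (simp add: sum_distrib_left)
  moreover have "(cmod (z \<epsilon> l))\<^sup>2 * (1/2) \<le> (cmod (z \<epsilon> l))\<^sup>2 * (\<Sum>i\<in>B. (cmod (f \<epsilon> l $ i))\<^sup>2)"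
    using elim by (intro mult_left_mono) auto
  ultimately show ?case unfolding Kz_def by linarith
qed


lemma lam_eigen:
  assumes "0 < \<epsilon>" "\<epsilon> < \<gamma>" "j < N"
  shows "eigenvalue (P \<epsilon>) (lam \<epsilon> j)"
proof -
  have fc: "f \<epsilon> j \<in> carrier_vec N" and n: "cvnorm (f \<epsilon> j) = 1" and e: "P \<epsilon> *\<^sub>v f \<epsilon> j = lam \<epsilon> j \<cdot>\<^sub>v f \<epsilon> j"
    using fprop[OF assms] by auto
  have "f \<epsilon> j \<noteq> 0\<^sub>v N"
  proof
    assume "f \<epsilon> j = 0\<^sub>v N"
    then have "cvnorm (f \<epsilon> j) = 0" by (simp add: cvnorm_def)
    with n show False by simp
  qed
  then show ?thesis unfolding eigenvalue_def eigenvector_def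
    using fc e by (auto simp: P_eq)
qed

lemma det_char:
  assumes e: "0 < \<epsilon>" "\<epsilon> < \<gamma>"
  shows "det (- char_matrix (P \<epsilon>) y) = (\<Prod>j<N. y - lam \<epsilon> j)"
  using char_poly_prod[OF P_carrier card_ev[OF e] inj[OF e] lam_eigen[OF e]]
    char_poly_matrix[OF P_carrier] by simp

lemma counting:
  assumes fe: "filterlim e (at_right 0) sequentially"
    and conv: "\<And>j. j \<in> B \<Longrightarrow> (\<lambda>n. z (e n) j) \<longlonglongrightarrow> \<nu> j"
    and x: "x \<in> E"
  shows "\<exists>j\<in>B. \<nu> j = of_real x"
proof -
  obtain v :: "nat \<Rightarrow> complex" where v1: "\<exists>i. i \<in> B \<and> v i \<noteq> 0" and v2: "\<And>i. i \<notin> B \<Longrightarrow> v i = 0"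
    and v3: "\<And>i. i \<in> B \<Longrightarrow> (\<Sum>j<N. of_real (W i j) * v j) = of_real x * v i"
    using E_vec[OF x] unfolding B_def by blast
  define dl :: "nat \<Rightarrow> nat \<Rightarrow> complex" where "dl i j = (if i = j then 1 else 0)" for i j
  define Z where "Z \<epsilon> = c * (1 + of_real \<epsilon> * of_real x)" for \<epsilon> :: real
  define M where "M \<epsilon> = mat N N (\<lambda>(i,j). if i \<in> B then c * (of_real x * dl i j - of_real (W i j))
      else Z \<epsilon> * dl i j - d i * (dl i j + of_real \<epsilon> * of_real (W i j)))" for \<epsilon> :: real
  define M0 where "M0 = mat N N (\<lambda>(i,j). if i \<in> B then c * (of_real x * dl i j - of_real (W i j))
      else (c - d i) * dl i j)"
  define R where "R \<epsilon> = c ^ card B * (\<Prod>j\<in>B. of_real x - z \<epsilon> j) * (\<Prod>j\<in>{..<N}-B. Z \<epsilon> - lam \<epsilon> j)" for \<epsilon>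
  have MR: "det (M \<epsilon>) = R \<epsilon>" if e: "0 < \<epsilon>" "\<epsilon> < \<gamma>" for \<epsilon>
  proof -
    have h1: "det (- char_matrix (P \<epsilon>) (Z \<epsilon>)) = (\<Prod>i<N. if i \<in> B then of_real \<epsilon> else 1) * det (M \<epsilon>)"
    proof (rule det_row_scale)
      show "- char_matrix (P \<epsilon>) (Z \<epsilon>) \<in> carrier_mat N N" using P_carrier by simp
      show "M \<epsilon> \<in> carrier_mat N N" by (simp add: M_def)
      fix i j assume ij: "i < N" "j < N"
      show "(- char_matrix (P \<epsilon>) (Z \<epsilon>)) $$ (i, j) = (if i \<in> B then complex_of_real \<epsilon> else 1) * M \<epsilon> $$ (i, j)"
      proof (cases "i \<in> B")
        case True
        then have "d i = c" by (auto simp: B_def)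
        then show ?thesis using True ij P_carrier
          by (simp add: char_matrix_def M_def P_eq Z_def dl_def algebra_simps)
      next
        case False
        then show ?thesis using ij P_carrier
          by (simp add: char_matrix_def M_def P_eq Z_def dl_def algebra_simps)
      qed
    qed
    have h2: "(\<Prod>i<N. if i \<in> B then (of_real \<epsilon> :: complex) else 1) = of_real \<epsilon> ^ card B"
    proof -
      have "(\<Prod>i<N. if i \<in> B then (of_real \<epsilon> :: complex) else 1) = (\<Prod>i\<in>{..<N} \<inter> B. of_real \<epsilon>)"
        by (simp add: prod.If_cases)
      also have "{..<N} \<inter> B = B" using B_sub by auto
      finally show ?thesis by simp
    qed
    have h3: "det (- char_matrix (P \<epsilon>) (Z \<epsilon>)) = (\<Prod>j<N. Z \<epsilon> - lam \<epsilon> j)"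
      by (rule det_char[OF e])
    have h4: "(\<Prod>j<N. Z \<epsilon> - lam \<epsilon> j) = (\<Prod>j\<in>B. Z \<epsilon> - lam \<epsilon> j) * (\<Prod>j\<in>{..<N}-B. Z \<epsilon> - lam \<epsilon> j)"
      using B_sub by (metis finite_lessThan prod.subset_diff mult.commute)
    have h5: "(\<Prod>j\<in>B. Z \<epsilon> - lam \<epsilon> j) = (\<Prod>j\<in>B. of_real \<epsilon> * c * (of_real x - z \<epsilon> j))"
      using e c_ne by (intro prod.cong refl) (simp add: Z_def z_def field_simps)
    have h6: "(\<Prod>j\<in>B. of_real \<epsilon> * c * (of_real x - z \<epsilon> j)) = (of_real \<epsilon> * c) ^ card B * (\<Prod>j\<in>B. of_real x - z \<epsilon> j)"
      by (simp add: prod.distrib)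
    have "of_real \<epsilon> ^ card B * det (M \<epsilon>) = (\<Prod>j<N. Z \<epsilon> - lam \<epsilon> j)"
      using h1 h2 h3 by simp
    also have "\<dots> = of_real \<epsilon> ^ card B * R \<epsilon>"
      unfolding h4 h5 h6 R_def by (simp add: power_mult_distrib)
    finally have "of_real \<epsilon> ^ card B * det (M \<epsilon>) = of_real \<epsilon> ^ card B * R \<epsilon>" .
    then show ?thesis using e by (auto simp: R_def mult.assoc)
  qed
  have e0: "(e \<longlongrightarrow> 0) sequentially" and epos: "eventually (\<lambda>n. e n \<in> {0<..} \<and> e n \<noteq> 0) sequentially"
    using fe unfolding filterlim_at by auto
  have evg: "eventually (\<lambda>n. 0 < e n \<and> e n < \<gamma>) sequentially"
    using fe ev_good unfolding filterlim_iff by auto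
  have l1: "(\<lambda>n. det (M (e n))) \<longlonglongrightarrow> det M0"
  proof (rule det_tendsto)
    show "M (e n) \<in> carrier_mat N N" for n by (simp add: M_def)
    show "M0 \<in> carrier_mat N N" by (simp add: M0_def)
    fix i j assume ij: "i < N" "j < N"
    show "(\<lambda>n. M (e n) $$ (i, j)) \<longlonglongrightarrow> M0 $$ (i, j)"
    proof (cases "i \<in> B")
      case True then show ?thesis using ij by (simp add: M_def M0_def)
    next
      case False
      have "(\<lambda>n. Z (e n) * dl i j - d i * (dl i j + of_real (e n) * of_real (W i j))) \<longlonglongrightarrow>
            c * (1 + of_real 0 * of_real x) * dl i j - d i * (dl i j + of_real 0 * of_real (W i j))"
        unfolding Z_def by (intro tendsto_intros e0)
      then show ?thesis using ij False by (simp add: M_def M0_def algebra_simps)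
    qed
  qed
  have l2: "(\<lambda>n. R (e n)) \<longlonglongrightarrow> c ^ card B * (\<Prod>j\<in>B. of_real x - \<nu> j) * (\<Prod>j\<in>{..<N}-B. c - d j)"
  proof -
    have "(\<lambda>n. R (e n)) \<longlonglongrightarrow> c ^ card B * (\<Prod>j\<in>B. of_real x - \<nu> j) * (\<Prod>j\<in>{..<N}-B. c * (1 + of_real 0 * of_real x) - d j)"
      unfolding R_def Z_def
    proof (intro tendsto_intros e0 tendsto_prod conv)
      fix j assume "j \<in> {..<N} - B"
      then show "(\<lambda>n. lam (e n) j) \<longlonglongrightarrow> d j"
        using filterlim_compose[OF lim fe] by auto
    qed auto
    then show ?thesis by simp
  qed
  have l2': "(\<lambda>n. det (M (e n))) \<longlonglongrightarrow> c ^ card B * (\<Prod>j\<in>B. of_real x - \<nu> j) * (\<Prod>j\<in>{..<N}-B. c - d j)"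
    using l2 by (rule Lim_transform_eventually) (use evg MR in \<open>auto elim: eventually_mono\<close>)
  have eqd: "det M0 = c ^ card B * (\<Prod>j\<in>B. of_real x - \<nu> j) * (\<Prod>j\<in>{..<N}-B. c - d j)"
    using LIMSEQ_unique[OF l1 l2'] .
  have "det M0 = 0"
  proof -
    have "\<exists>w. w \<in> carrier_vec N \<and> w \<noteq> 0\<^sub>v N \<and> M0 *\<^sub>v w = 0\<^sub>v N"
    proof (intro exI conjI)
      show "vec N v \<in> carrier_vec N" by simp
      show "vec N v \<noteq> 0\<^sub>v N"
      proof
        assume a: "vec N v = 0\<^sub>v N"
        obtain i where "i \<in> B" "v i \<noteq> 0" using v1 by auto
        moreover then have "i < N" using B_sub by auto
        ultimately show False using arg_cong[OF a, of "\<lambda>w. w $ i"] by simp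
      qed
      show "M0 *\<^sub>v vec N v = 0\<^sub>v N"
      proof (rule eq_vecI)
        show "dim_vec (M0 *\<^sub>v vec N v) = dim_vec (0\<^sub>v N)" by (simp add: M0_def)
        fix i assume "i < dim_vec (0\<^sub>v N)"
        then have i: "i < N" by simp
        have rw: "(M0 *\<^sub>v vec N v) $ i = (\<Sum>j<N. M0 $$ (i,j) * v j)"
          using i by (simp add: M0_def scalar_prod_def atLeast0LessThan)
        show "(M0 *\<^sub>v vec N v) $ i = 0\<^sub>v N $ i"
        proof (cases "i \<in> B")
          case True
          have "(\<Sum>j<N. M0 $$ (i,j) * v j) = (\<Sum>j<N. c * of_real x * (dl i j * v j)) - c * (\<Sum>j<N. of_real (W i j) * v j)"
            using i True by (simp add: M0_def sum_distrib_left sum_subtractf[symmetric] algebra_simps)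
          also have "\<dots> = c * of_real x * v i - c * (of_real x * v i)"
            using i v3[OF True] by (simp add: dl_def sum_distrib_left[symmetric] if_distrib[where f="\<lambda>a. a * _"] sum.delta cong: if_cong)
          finally show ?thesis using rw i by simp
        next
          case False
          have "(\<Sum>j<N. M0 $$ (i,j) * v j) = (\<Sum>j<N. (c - d i) * (dl i j * v j))"
            using i False by (intro sum.cong refl) (simp add: M0_def)
          also have "\<dots> = 0" using i v2[OF False] by (intro sum.neutral) (auto simp: dl_def)
          finally show ?thesis using rw i by simp
        qed
      qed
    qed
    then show ?thesis using det_0_iff_vec_prod_zero[of M0 N] by (simp add: M0_def)
  qed
  with eqd have "c ^ card B * (\<Prod>j\<in>B. of_real x - \<nu> j) * (\<Prod>j\<in>{..<N}-B. c - d j) = 0" by simp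
  moreover have "(\<Prod>j\<in>{..<N}-B. c - d j) \<noteq> 0"
    by (subst prod_zero_iff) (auto simp: B_def)
  moreover have "c ^ card B \<noteq> 0" using c_ne by simp
  ultimately have "(\<Prod>j\<in>B. of_real x - \<nu> j) = 0" using c_ne by (simp del: prod_zero_iff)
  then show ?thesis using finB by (subst (asm) prod_zero_iff) auto
qed


lemma sep:
  assumes lB: "l \<in> B" and mB: "m \<in> B" and lm: "l \<noteq> m"
  shows "\<exists>\<delta>>0. eventually (\<lambda>\<epsilon>. \<delta> \<le> cmod (z \<epsilon> l - cnj (z \<epsilon> m))) (at_right 0)"
proof (rule ccontr)
  assume H: "\<not> ?thesis"
  have "\<forall>n::nat. \<exists>\<epsilon>. 0 < \<epsilon> \<and> \<epsilon> < inverse (real (Suc n)) \<and> cmod (z \<epsilon> l - cnj (z \<epsilon> m)) < inverse (real (Suc n))"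
  proof
    fix n :: nat
    have pos: "0 < inverse (real (Suc n))" by simp
    then have "\<not> eventually (\<lambda>\<epsilon>. inverse (real (Suc n)) \<le> cmod (z \<epsilon> l - cnj (z \<epsilon> m))) (at_right 0)"
      using H by blast
    then have "\<not> (\<forall>y>0. y < inverse (real (Suc n)) \<longrightarrow> inverse (real (Suc n)) \<le> cmod (z y l - cnj (z y m)))"
      unfolding eventually_at_right_field using pos by blast
    then show "\<exists>\<epsilon>. 0 < \<epsilon> \<and> \<epsilon> < inverse (real (Suc n)) \<and> cmod (z \<epsilon> l - cnj (z \<epsilon> m)) < inverse (real (Suc n))"
      by (auto simp: not_le)
  qed
  then obtain e where e: "\<And>n. 0 < e n" "\<And>n. e n < inverse (real (Suc n))"
    and ez: "\<And>n. cmod (z (e n) l - cnj (z (e n) m)) < inverse (real (Suc n))"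
    by metis
  have e0: "e \<longlonglongrightarrow> 0"
  proof (rule Lim_null_comparison[OF _ LIMSEQ_inverse_real_of_nat])
    show "eventually (\<lambda>n. norm (e n) \<le> inverse (real (Suc n))) sequentially"
      using e by (auto intro!: always_eventually less_imp_le simp: abs_of_pos)
  qed
  have fe: "filterlim e (at_right 0) sequentially"
    by (rule tendsto_imp_filterlim_at_right[OF e0]) (use e in auto)
  have "eventually (\<lambda>\<epsilon>. \<forall>j\<in>B. (cmod (z \<epsilon> j))\<^sup>2 \<le> Kz) (at_right 0)"
    using finB zbound by (simp add: eventually_ball_finite)
  then have "eventually (\<lambda>n. \<forall>j\<in>B. (cmod (z (e n) j))\<^sup>2 \<le> Kz) sequentially"
    using fe unfolding filterlim_iff by blast
  then obtain n0 where n0: "\<And>n j. n \<ge> n0 \<Longrightarrow> j \<in> B \<Longrightarrow> (cmod (z (e n) j))\<^sup>2 \<le> Kz"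
    unfolding eventually_sequentially by blast
  define e' where "e' n = e (n + n0)" for n
  have bd: "bounded (range (\<lambda>n. z (e' n) j))" if j: "j \<in> B" for j
    unfolding bounded_iff
  proof (intro exI ballI)
    fix y assume "y \<in> range (\<lambda>n. z (e' n) j)"
    then obtain n where y: "y = z (e' n) j" by auto
    have "(cmod y)\<^sup>2 \<le> Kz" using n0[of "n + n0" j] j y by (simp add: e'_def)
    then show "norm y \<le> sqrt Kz" by (simp add: real_le_rsqrt)
  qed
  obtain r where r: "strict_mono r" and cv: "\<forall>j\<in>B. \<exists>a. (\<lambda>n. z (e' (r n)) j) \<longlonglongrightarrow> a"
    using finite_bolzano[of B "\<lambda>j n. z (e' n) j", OF finB bd] by auto
  obtain \<nu> where \<nu>: "\<And>j. j \<in> B \<Longrightarrow> (\<lambda>n. z (e' (r n)) j) \<longlonglongrightarrow> \<nu> j"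
    using bchoice[OF cv] by metis
  have rle: "n \<le> r n" for n using seq_suble[OF r] by simp
  have e''0: "(\<lambda>n. e' (r n)) \<longlonglongrightarrow> 0"
  proof (rule Lim_null_comparison[OF _ LIMSEQ_inverse_real_of_nat])
    show "eventually (\<lambda>n. norm (e' (r n)) \<le> inverse (real (Suc n))) sequentially"
    proof (intro always_eventually allI)
      fix n
      have "norm (e' (r n)) < inverse (real (Suc (r n + n0)))"
        using e[of "r n + n0"] by (simp add: e'_def abs_of_pos)
      also have "\<dots> \<le> inverse (real (Suc n))"
        using rle[of n] by (simp add: field_simps)
      finally show "norm (e' (r n)) \<le> inverse (real (Suc n))" by simp
    qed
  qed
  have fe'': "filterlim (\<lambda>n. e' (r n)) (at_right 0) sequentially"
    by (rule tendsto_imp_filterlim_at_right[OF e''0]) (use e in \<open>auto simp: e'_def\<close>)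
  have cover: "\<forall>x\<in>E. \<exists>j\<in>B. \<nu> j = of_real x"
    using counting[OF fe'' \<nu>] by blast
  have cardB: "card B > 0" using lB finB by (auto simp: card_gt_0_iff)
  have finE: "finite E" using E_card cardB unfolding B_def by (metis card_ge_0_finite)
  have sub: "of_real ` E \<subseteq> \<nu> ` B" using cover by force
  have c1: "card (of_real ` E :: complex set) = card B"
    using E_card by (simp add: card_image inj_on_def B_def)
  have c2: "card (\<nu> ` B) \<le> card B" by (rule card_image_le[OF finB])
  have c3: "card (of_real ` E :: complex set) \<le> card (\<nu> ` B)"
    by (rule card_mono[OF _ sub]) (use finB in simp)
  have injn: "inj_on \<nu> B"
    using c1 c2 c3 finB by (simp add: eq_card_imp_inj_on)
  have eqs: "of_real ` E = \<nu> ` B"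
    by (rule card_subset_eq) (use finB sub c1 c2 c3 in auto)
  have nl: "\<nu> l \<noteq> \<nu> m" using injn lB mB lm by (meson inj_onD)
  have "\<nu> m \<in> of_real ` E" using eqs mB by auto
  then have cm: "cnj (\<nu> m) = \<nu> m" by auto
  have lim1: "(\<lambda>n. z (e' (r n)) l - cnj (z (e' (r n)) m)) \<longlonglongrightarrow> \<nu> l - cnj (\<nu> m)"
    by (intro tendsto_intros \<nu> lB mB)
  have lim2: "(\<lambda>n. z (e' (r n)) l - cnj (z (e' (r n)) m)) \<longlonglongrightarrow> 0"
  proof (rule Lim_null_comparison[OF _ LIMSEQ_inverse_real_of_nat])
    show "eventually (\<lambda>n. norm (z (e' (r n)) l - cnj (z (e' (r n)) m)) \<le> inverse (real (Suc n))) sequentially"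
    proof (intro always_eventually allI)
      fix n
      have "norm (z (e' (r n)) l - cnj (z (e' (r n)) m)) < inverse (real (Suc (r n + n0)))"
        using ez[of "r n + n0"] by (simp add: e'_def)
      also have "\<dots> \<le> inverse (real (Suc n))"
        using rle[of n] by (simp add: field_simps)
      finally show "norm (z (e' (r n)) l - cnj (z (e' (r n)) m)) \<le> inverse (real (Suc n))" by simp
    qed
  qed
  from LIMSEQ_unique[OF lim1 lim2] cm nl show False by simp
qed

lemma same_case:
  assumes lB: "l \<in> B" and mB: "m \<in> B" and lm: "l \<noteq> m"
  shows "((\<lambda>\<epsilon>. cinner (f \<epsilon> l) (f \<epsilon> m)) \<longlongrightarrow> 0) (at_right 0)"
proof -
  obtain \<delta> where dpos: "\<delta> > 0" and ev: "eventually (\<lambda>\<epsilon>. \<delta> \<le> cmod (z \<epsilon> l - cnj (z \<epsilon> m))) (at_right 0)"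
    using sep[OF assms] by blast
  have T: "((\<lambda>\<epsilon>. norm ((z \<epsilon> l - cnj (z \<epsilon> m)) * Q \<epsilon> l m) / \<delta>) \<longlongrightarrow> 0 / \<delta>) (at_right 0)"
    by (intro tendsto_intros tendsto_norm_zero T_zero lB mB) (use dpos in auto)
  have Q0: "((\<lambda>\<epsilon>. Q \<epsilon> l m) \<longlongrightarrow> 0) (at_right 0)"
  proof (rule Lim_null_comparison)
    show "((\<lambda>\<epsilon>. norm ((z \<epsilon> l - cnj (z \<epsilon> m)) * Q \<epsilon> l m) / \<delta>) \<longlongrightarrow> 0) (at_right 0)" using T by simp
    show "eventually (\<lambda>\<epsilon>. norm (Q \<epsilon> l m) \<le> norm ((z \<epsilon> l - cnj (z \<epsilon> m)) * Q \<epsilon> l m) / \<delta>) (at_right 0)"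
      using ev
    proof eventually_elim
      case (elim \<epsilon>)
      have "\<delta> * norm (Q \<epsilon> l m) \<le> cmod (z \<epsilon> l - cnj (z \<epsilon> m)) * norm (Q \<epsilon> l m)"
        using elim by (intro mult_right_mono) auto
      moreover have "norm ((z \<epsilon> l - cnj (z \<epsilon> m)) * Q \<epsilon> l m) = cmod (z \<epsilon> l - cnj (z \<epsilon> m)) * norm (Q \<epsilon> l m)"
        by (rule norm_mult)
      ultimately show ?case using dpos by (simp add: pos_le_divide_eq mult.commute)
    qed
  qed
  have "((\<lambda>\<epsilon>. (cinner (f \<epsilon> l) (f \<epsilon> m) - Q \<epsilon> l m) + Q \<epsilon> l m) \<longlongrightarrow> 0 + 0) (at_right 0)"
    by (intro tendsto_add inner_Q Q0 lB mB)
  then show ?thesis by simp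
qed

end


lemma bwN_Suc: "s < length L \<Longrightarrow> bwN L (Suc s) = bwN L s + L ! s"
  by (simp add: bwN_def take_Suc_conv_app_nth)

lemma bwN_mono: "a \<le> b \<Longrightarrow> bwN L a \<le> bwN L b"
proof -
  assume "a \<le> b"
  then obtain c where "b = a + c" using le_Suc_ex by blast
  then show ?thesis by (simp add: bwN_def take_add)
qed

lemma bwN_len: "bwN L (length L) = sum_list L"
  by (simp add: bwN_def)

lemma block_exists:
  assumes "j < sum_list L"
  shows "\<exists>s<length L. j \<in> block L s"
proof -
  define s where "s = (LEAST s. j < bwN L (Suc s))"
  have ex: "j < bwN L (Suc (length L - 1))"
  proof -
    have "length L > 0" using assms by (cases L) auto
    then show ?thesis using assms bwN_len[of L] by simp
  qed
  have s1: "j < bwN L (Suc s)" unfolding s_def by (rule LeastI[of _ "length L - 1"], rule ex)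
  have s2: "s \<le> length L - 1" unfolding s_def by (rule Least_le, rule ex)
  have len: "length L > 0" using assms by (cases L) auto
  have s3: "bwN L s \<le> j"
  proof (cases s)
    case 0 then show ?thesis by (simp add: bwN_def)
  next
    case (Suc s')
    then have "\<not> j < bwN L (Suc s')" using not_less_Least[of s' "\<lambda>s. j < bwN L (Suc s)"] unfolding s_def by auto
    then show ?thesis using Suc by simp
  qed
  have "s < length L" using s2 len by linarith
  then show ?thesis using s1 s3 by (intro exI[of _ s]) (auto simp: block_def)
qed

lemma block_unique:
  assumes "j \<in> block L s1" "j \<in> block L s2"
  shows "s1 = s2"
proof (rule ccontr)
  assume "s1 \<noteq> s2"
  then consider "Suc s1 \<le> s2" | "Suc s2 \<le> s1" by linarith
  then show False
  proof cases
    case 1 then show False using bwN_mono[OF 1, of L] assms by (auto simp: block_def)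
  next
    case 2 then show False using bwN_mono[OF 2, of L] assms by (auto simp: block_def)
  qed
qed

lemma block_lt: "s < length L \<Longrightarrow> j \<in> block L s \<Longrightarrow> j < sum_list L"
  using bwN_mono[of "Suc s" "length L" L] bwN_len[of L] by (auto simp: block_def)

lemma block_img: "s < length L \<Longrightarrow> block L s = (\<lambda>t. bwN L s + t) ` {..<L ! s}"
proof -
  assume s: "s < length L"
  show ?thesis
  proof
    show "block L s \<subseteq> (\<lambda>t. bwN L s + t) ` {..<L ! s}"
    proof
      fix x assume "x \<in> block L s"
      then have "bwN L s \<le> x" "x < bwN L s + L ! s" using s by (auto simp: block_def bwN_Suc)
      then show "x \<in> (\<lambda>t. bwN L s + t) ` {..<L ! s}"
        by (intro image_eqI[of _ _ "x - bwN L s"]) auto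
    qed
  qed (use s in \<open>auto simp: block_def bwN_Suc\<close>)
qed

lemma card_block: "s < length L \<Longrightarrow> card (block L s) = L ! s"
  by (simp add: block_img card_image inj_on_def)

lemma Dmat_diag:
  assumes "s < length L" "i \<in> block L s"
  shows "Dmat k \<beta> L $$ (i,i) = cis (- 2 * pi * real k * \<beta> s)"
proof -
  have i: "i < sum_list L" using block_lt assms by blast
  have "(\<Sum>s'<length L. if i \<in> block L s' then cis (- 2 * pi * real k * \<beta> s') else 0)
      = (\<Sum>s'<length L. if s' = s then cis (- 2 * pi * real k * \<beta> s') else 0)"
    by (intro sum.cong refl) (use assms block_unique in auto)
  also have "\<dots> = cis (- 2 * pi * real k * \<beta> s)" using assms by simp
  finally show ?thesis using i by (simp add: Dmat_def)
qed

lemma Dmat_mult: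
  assumes X: "X \<in> carrier_mat (sum_list L) (sum_list L)"
  shows "Dmat k \<beta> L * X = mat (sum_list L) (sum_list L) (\<lambda>(i,j). Dmat k \<beta> L $$ (i,i) * X $$ (i,j))"
proof (rule eq_matI)
  fix i j assume ij: "i < dim_row (mat (sum_list L) (sum_list L) (\<lambda>(i,j). Dmat k \<beta> L $$ (i,i) * X $$ (i,j)))"
    "j < dim_col (mat (sum_list L) (sum_list L) (\<lambda>(i,j). Dmat k \<beta> L $$ (i,i) * X $$ (i,j)))"
  then have i: "i < sum_list L" and j: "j < sum_list L" by auto
  have "(Dmat k \<beta> L * X) $$ (i,j) = (\<Sum>t<sum_list L. Dmat k \<beta> L $$ (i,t) * X $$ (t,j))"
    using i j X by (simp add: Dmat_def scalar_prod_def atLeast0LessThan)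
  also have "\<dots> = (\<Sum>t<sum_list L. if t = i then Dmat k \<beta> L $$ (i,i) * X $$ (i,j) else 0)"
    using i by (intro sum.cong refl) (auto simp: Dmat_def)
  also have "\<dots> = Dmat k \<beta> L $$ (i,i) * X $$ (i,j)" using i by simp
  finally show "(Dmat k \<beta> L * X) $$ (i,j) = mat (sum_list L) (sum_list L) (\<lambda>(i,j). Dmat k \<beta> L $$ (i,i) * X $$ (i,j)) $$ (i,j)"
    using i j by simp
qed (use X in \<open>auto simp: Dmat_def\<close>)

lemma block_eigvec:
  fixes Wd :: "real mat"
  assumes s: "s < length L" and ev: "diag_block Wd L s *\<^sub>v v = x \<cdot>\<^sub>v v" and v: "v \<in> carrier_vec (L ! s)"
    and i: "i \<in> block L s"
  shows "(\<Sum>j<sum_list L. complex_of_real (Wd $$ (i,j)) *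
            (if j \<in> block L s then complex_of_real (v $ (j - bwN L s)) else 0))
         = complex_of_real x * complex_of_real (v $ (i - bwN L s))"
proof -
  have sub: "block L s \<subseteq> {..<sum_list L}" using block_lt[OF s] by auto
  have fin: "finite (block L s)" using sub finite_subset by blast
  obtain i' where i': "i = bwN L s + i'" "i' < L ! s" using i block_img[OF s] by auto
  have "(\<Sum>j<sum_list L. complex_of_real (Wd $$ (i,j)) *
            (if j \<in> block L s then complex_of_real (v $ (j - bwN L s)) else 0))
       = (\<Sum>j\<in>block L s. complex_of_real (Wd $$ (i,j)) * complex_of_real (v $ (j - bwN L s)))"
    by (rule sum.mono_neutral_cong_right) (use sub in auto)
  also have "\<dots> = (\<Sum>t<L ! s. complex_of_real (Wd $$ (i, bwN L s + t)) * complex_of_real (v $ t))"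
    unfolding block_img[OF s] by (subst sum.reindex) (auto simp: inj_on_def)
  also have "\<dots> = complex_of_real (\<Sum>t<L ! s. Wd $$ (i, bwN L s + t) * v $ t)" by simp
  also have "(\<Sum>t<L ! s. Wd $$ (i, bwN L s + t) * v $ t) = (diag_block Wd L s *\<^sub>v v) $ i'"
    using i' v by (simp add: diag_block_def scalar_prod_def atLeast0LessThan)
  also have "\<dots> = x * v $ i'" using ev i' v by simp
  finally show ?thesis using i' by simp
qed

theorem lemma4p4:
  fixes L :: "nat list" and Wd :: "real mat" and k :: nat and \<beta> :: "nat \<Rightarrow> real"
    and \<gamma> :: real and f :: "real \<Rightarrow> nat \<Rightarrow> complex vec" and lam :: "real \<Rightarrow> nat \<Rightarrow> complex"
  defines "N \<equiv> sum_list L" and "S \<equiv> length L"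
  defines "P \<equiv> (\<lambda>\<epsilon>::real. Dmat k \<beta> L * (1\<^sub>m N + complex_of_real \<epsilon> \<cdot>\<^sub>m map_mat complex_of_real Wd))"
  assumes "1 < S" and "S \<le> N"
    and "bw_vector L"
    and "L_admissible L Wd"
    and "0 < k"
    and "\<beta> \<in> Gamma S"
    and "0 < \<gamma>"
    and "\<And>\<epsilon>. 0 < \<epsilon> \<Longrightarrow> \<epsilon> < \<gamma> \<Longrightarrow> card {x. eigenvalue (P \<epsilon>) x} = N"
    and "\<And>\<epsilon> l. 0 < \<epsilon> \<Longrightarrow> \<epsilon> < \<gamma> \<Longrightarrow> l < N \<Longrightarrow>
           f \<epsilon> l \<in> carrier_vec N \<and> cvnorm (f \<epsilon> l) = 1 \<and> P \<epsilon> *\<^sub>v f \<epsilon> l = lam \<epsilon> l \<cdot>\<^sub>v f \<epsilon> l"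
    and "\<And>\<epsilon>. 0 < \<epsilon> \<Longrightarrow> \<epsilon> < \<gamma> \<Longrightarrow> inj_on (lam \<epsilon>) {..<N}"
    and "\<And>l s. s < S \<Longrightarrow> l \<in> block L s \<Longrightarrow>
           ((\<lambda>\<epsilon>. lam \<epsilon> l) \<longlongrightarrow> cis (- 2 * pi * real k * \<beta> s)) (at_right 0)"
  shows "\<forall>l<N. \<forall>m<N. l \<noteq> m \<longrightarrow> ((\<lambda>\<epsilon>. cinner (f \<epsilon> l) (f \<epsilon> m)) \<longlongrightarrow> 0) (at_right 0)"
proof (intro allI impI)
  fix l m assume lN: "l < N" and mN: "m < N" and lm: "l \<noteq> m"
  note as = assms(4-)
  define d where "d i = Dmat k \<beta> L $$ (i,i)" for i
  define W where "W i j = Wd $$ (i,j)" for i j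
  have Wc: "Wd \<in> carrier_mat N N" and Wt: "transpose_mat Wd = Wd"
    and Ecard: "\<And>s. s < S \<Longrightarrow> card {x. eigenvalue (diag_block Wd L s) x} = L ! s"
    using as(4) unfolding L_admissible_def N_def[symmetric] S_def[symmetric] Let_def by auto
  have dblk: "d i = cis (- 2 * pi * real k * \<beta> s)" if "s < S" "i \<in> block L s" for i s
    using Dmat_diag that unfolding d_def S_def by blast
  have blk: "\<exists>s<S. i \<in> block L s" if "i < N" for i
    using block_exists that unfolding N_def S_def by blast
  have deq: "d i = d j \<longleftrightarrow> (\<exists>s<S. i \<in> block L s \<and> j \<in> block L s)" if ij: "i < N" "j < N" for i j
  proof
    obtain si where si: "si < S" "i \<in> block L si" using blk ij by blast
    obtain sj where sj: "sj < S" "j \<in> block L sj" using blk ij by blast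
    assume "d i = d j"
    then have "cis (- 2 * pi * real_of_int (int k) * \<beta> si) = cis (- 2 * pi * real_of_int (int k) * \<beta> sj)"
      using dblk si sj by simp
    have G: "\<And>s1 s2. s1 < S \<Longrightarrow> s2 < S \<Longrightarrow> s1 \<noteq> s2 \<Longrightarrow>
        cis (- 2 * pi * real_of_int (int k) * \<beta> s1) \<noteq> cis (- 2 * pi * real_of_int (int k) * \<beta> s2)"
    proof -
      have g0: "\<forall>k::int. \<forall>s1<S. \<forall>s2<S. k \<noteq> 0 \<and> s1 \<noteq> s2 \<longrightarrow>
          cis (- 2 * pi * real_of_int k * \<beta> s1) \<noteq> cis (- 2 * pi * real_of_int k * \<beta> s2)"
        using as(6) unfolding Gamma_def by blast
      fix s1 s2 assume "s1 < S" "s2 < S" "s1 \<noteq> s2"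
      then show "cis (- 2 * pi * real_of_int (int k) * \<beta> s1) \<noteq> cis (- 2 * pi * real_of_int (int k) * \<beta> s2)"
        using spec[OF g0, of "int k"] as(5) by simp
    qed
    then have "si = sj" using si(1) sj(1) \<open>cis (- 2 * pi * real_of_int (int k) * \<beta> si) = cis (- 2 * pi * real_of_int (int k) * \<beta> sj)\<close> by blast
    then show "\<exists>s<S. i \<in> block L s \<and> j \<in> block L s" using si sj by blast
  next
    assume "\<exists>s<S. i \<in> block L s \<and> j \<in> block L s"
    then show "d i = d j" using dblk by metis
  qed
  have Peq: "P \<epsilon> = mat N N (\<lambda>(i,j). d i * ((if i = j then 1 else 0) + of_real \<epsilon> * of_real (W i j)))" for \<epsilon>
  proof -
    have X: "1\<^sub>m N + complex_of_real \<epsilon> \<cdot>\<^sub>m map_mat complex_of_real Wd \<in> carrier_mat N N" using Wc by simp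
    show ?thesis unfolding P_def using Dmat_mult[OF X[unfolded N_def]] Wc
      by (intro eq_matI) (auto simp: N_def[symmetric] d_def W_def)
  qed
  interpret pert N d W \<gamma> f lam P
  proof
    show "\<And>\<epsilon>. P \<epsilon> = mat N N (\<lambda>(i,j). d i * ((if i = j then 1 else 0) + of_real \<epsilon> * of_real (W i j)))" by (rule Peq)
    show "\<And>i j. i < N \<Longrightarrow> j < N \<Longrightarrow> W i j = W j i"
      using Wt Wc unfolding W_def by (metis carrier_matD index_transpose_mat(1))
    show "0 < \<gamma>" by (rule as(7))
    show "\<And>\<epsilon>. 0 < \<epsilon> \<Longrightarrow> \<epsilon> < \<gamma> \<Longrightarrow> card {x. eigenvalue (P \<epsilon>) x} = N" by (rule as(8))
    show "\<And>\<epsilon> l. 0 < \<epsilon> \<Longrightarrow> \<epsilon> < \<gamma> \<Longrightarrow> l < N \<Longrightarrow>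
           f \<epsilon> l \<in> carrier_vec N \<and> cvnorm (f \<epsilon> l) = 1 \<and> P \<epsilon> *\<^sub>v f \<epsilon> l = lam \<epsilon> l \<cdot>\<^sub>v f \<epsilon> l" by (rule as(9))
    show "\<And>\<epsilon>. 0 < \<epsilon> \<Longrightarrow> \<epsilon> < \<gamma> \<Longrightarrow> inj_on (lam \<epsilon>) {..<N}" by (rule as(10))
    fix j assume "j < N"
    then obtain s where s: "s < S" "j \<in> block L s" using blk by blast
    then show "((\<lambda>\<epsilon>. lam \<epsilon> j) \<longlongrightarrow> d j) (at_right 0)" using as(11) dblk by metis
  qed
  show "((\<lambda>\<epsilon>. cinner (f \<epsilon> l) (f \<epsilon> m)) \<longlongrightarrow> 0) (at_right 0)"
  proof (cases "d l = d m")
    case False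
    then show ?thesis by (rule diff_case[OF lN mN])
  next
    case True
    obtain s where s: "s < S" "l \<in> block L s" using blk lN by blast
    define c where "c = d l"
    define E where "E = {x. eigenvalue (diag_block Wd L s) x}"
    have B1: "j \<in> block L s" if j: "j < N" "d j = c" for j
    proof -
      obtain s' where "s' < S" "j \<in> block L s'" "l \<in> block L s'" using deq[OF j(1) lN] j(2) c_def by metis
      then show "j \<in> block L s" using s block_unique by metis
    qed
    have B2: "j < N \<and> d j = c" if jb: "j \<in> block L s" for j
    proof -
      have jN: "j < N" using block_lt s jb unfolding N_def S_def by blast
      then have "d j = c" using deq[OF jN lN] s jb c_def by metis
      then show ?thesis using jN by simp
    qed
    have Bset: "{j. j < N \<and> d j = c} = block L s" using B1 B2 by blast
    interpret pert_block N d W \<gamma> f lam P c E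
    proof
      show "c \<noteq> 0" using dblk s c_def by simp
      show "card E = card {j. j < N \<and> d j = c}"
        unfolding Bset E_def using Ecard s card_block unfolding S_def by metis
      fix x assume "x \<in> E"
      then obtain v where v: "v \<in> carrier_vec (L ! s)" "v \<noteq> 0\<^sub>v (L ! s)" "diag_block Wd L s *\<^sub>v v = x \<cdot>\<^sub>v v"
        unfolding E_def eigenvalue_def eigenvector_def by (auto simp: diag_block_def)
      define u where "u j = (if j \<in> block L s then complex_of_real (v $ (j - bwN L s)) else 0)" for j
      show "\<exists>v::nat \<Rightarrow> complex. (\<exists>i. i < N \<and> d i = c \<and> v i \<noteq> 0) \<and>
        (\<forall>i. \<not> (i < N \<and> d i = c) \<longrightarrow> v i = 0) \<and>
        (\<forall>i. i < N \<and> d i = c \<longrightarrow> (\<Sum>j<N. of_real (W i j) * v j) = of_real x * v i)"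
      proof (intro exI[of _ u] conjI allI impI)
        obtain t where t: "t < L ! s" "v $ t \<noteq> 0" using v(1,2) by (metis carrier_vecD eq_vecI index_zero_vec)
        have "bwN L s + t \<in> block L s" using t s unfolding S_def by (simp add: block_img)
        then show "\<exists>i. i < N \<and> d i = c \<and> u i \<noteq> 0" using t Bset[symmetric]
          by (intro exI[of _ "bwN L s + t"]) (auto simp: u_def)
      next
        fix i assume "\<not> (i < N \<and> d i = c)"
        then show "u i = 0" using Bset u_def by auto
      next
        fix i assume "i < N \<and> d i = c"
        then have i: "i \<in> block L s" using Bset by auto
        show "(\<Sum>j<N. of_real (W i j) * u j) = of_real x * u i"
          using block_eigvec[OF s(1)[unfolded S_def] v(3) v(1) i] i unfolding u_def W_def N_def by simp
      qed
    qed
    have "l \<in> B" "m \<in> B" unfolding B_iff using lN mN True c_def by auto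
    then show ?thesis by (rule same_case[OF _ _ lm])
  qed
qed

end
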